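(* Let $h:(\mathbb{R}^n,0)\to(\mathbb{R}^n,0)$ be a weak diffeomorphism. Then $h$ is an (SSP) homeomorphism, and $h$ satisfies condition semiline-(SSP).
   Context: A weak diffeomorphism is a homeomorphism germ $h:(\mathbb{R}^n,0)\to(\mathbb{R}^n,0)$ such that both $h$ and $h^{-1}$ are differentiable at $0$ (admit a linear approximation at $0$); equivalently $h(x)=M_h(x)+O_h(x)$ near $0$ with $M_h$ an invertible linear map and $\|O_h(x)\|/\|x\|\to0$ as $x\to0$, and similarly for $h^{-1}$. For a set-germ $A\subset\mathbb{R}^k$ at $0$ with $0\in\overline A$, $D(A)=\{a\in S^{k-1}:\exists\, x_i\in A\setminus\{0\},\ x_i\to0,\ x_i/\|x_i\|\to a\}$. For sequences, $\|u_m\|\ll\|v_m\|,\|w_m\|$ means $\|u_m\|/\|v_m\|\to0$ and $\|u_m\|/\|w_m\|\to0$. $A$ satisfies condition (SSP) if for every sequence $a_m\in\mathbb{R}^k$ tending to $0$ with $\lim a_m/\|a_m\|\in D(A)$ there is a sequence $b_m\in A$ with $\|a_m-b_m\|\ll\|a_m\|,\|b_m\|$. A homeomorphism germ $h$ is an (SSP) homeomorphism if its graph $\{(x,h(x))\}\subset\mathbb{R}^n\times\mathbb{R}^n$ satisfies condition (SSP) at $(0,0)$. A semiline is a set $\{ta: t\ge0\}$ with $a\in S^{n-1}$. A homeomorphism germ $h$ satisfies condition semiline-(SSP) if for every semiline $\ell$, the image $h(\ell)$ has a unique direction, i.e. $D(h(\ell))$ is a single point. *)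

theory Defs
  imports "HOL-Analysis.Analysis"
begin

definition dirs :: "'b::real_normed_vector set \<Rightarrow> 'b set" where
  "dirs A = {a. norm a = 1 \<and> (\<exists>x::nat \<Rightarrow> 'b. (\<forall>i. x i \<in> A - {0}) \<and> x \<longlonglongrightarrow> 0 \<and>
                 (\<lambda>i. x i /\<^sub>R norm (x i)) \<longlonglongrightarrow> a)}"

definition SSP :: "'b::real_normed_vector set \<Rightarrow> bool" where
  "SSP A \<longleftrightarrow> 0 \<in> closure A \<and>
     (\<forall>(a::nat \<Rightarrow> 'b) d. a \<longlonglongrightarrow> 0 \<longrightarrow> (\<lambda>m. a m /\<^sub>R norm (a m)) \<longlonglongrightarrow> d \<longrightarrow> d \<in> dirs A \<longrightarrow>
        (\<exists>b. (\<forall>m. b m \<in> A) \<and>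
             (\<lambda>m. norm (a m - b m) / norm (a m)) \<longlonglongrightarrow> 0 \<and>
             (\<lambda>m. norm (a m - b m) / norm (b m)) \<longlonglongrightarrow> 0))"

text \<open>A homeomorphism germ (R^n,0) -> (R^n,0), represented by a homeomorphism
  h : U -> V between open neighbourhoods of 0 with inverse g and h 0 = 0.\<close>
definition hom_germ :: "('a::euclidean_space \<Rightarrow> 'a) \<Rightarrow> ('a \<Rightarrow> 'a) \<Rightarrow> 'a set \<Rightarrow> 'a set \<Rightarrow> bool" where
  "hom_germ h g U V \<longleftrightarrow> open U \<and> open V \<and> 0 \<in> U \<and> h 0 = 0 \<and> homeomorphism U V h g"

definition weak_diffeo :: "('a::euclidean_space \<Rightarrow> 'a) \<Rightarrow> ('a \<Rightarrow> 'a) \<Rightarrow> 'a set \<Rightarrow> 'a set \<Rightarrow> bool" where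
  "weak_diffeo h g U V \<longleftrightarrow> hom_germ h g U V \<and> h differentiable (at 0) \<and> g differentiable (at 0)"

definition SSP_homeo :: "('a::euclidean_space \<Rightarrow> 'a) \<Rightarrow> 'a set \<Rightarrow> bool" where
  "SSP_homeo h U \<longleftrightarrow> SSP {(x, h x) | x. x \<in> U}"

definition semiline :: "'a::real_normed_vector \<Rightarrow> 'a set" where
  "semiline a = {t *\<^sub>R a | t. t \<ge> 0}"

definition semiline_SSP :: "('a::euclidean_space \<Rightarrow> 'a) \<Rightarrow> 'a set \<Rightarrow> bool" where
  "semiline_SSP h U \<longleftrightarrow> (\<forall>a. norm a = 1 \<longrightarrow> (\<exists>!d. d \<in> dirs (h ` (semiline a \<inter> U))))"

end

theory Submission
  imports Defs
begin

lemma setup_facts: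
  fixes h g :: "'a::euclidean_space \<Rightarrow> 'a" and U V :: "'a set"
  assumes "weak_diffeo h g U V"
  obtains L where "bounded_linear L" "\<And>v. v \<noteq> 0 \<Longrightarrow> L v \<noteq> 0"
    "\<And>e. e > 0 \<Longrightarrow> \<exists>d>0. \<forall>y. norm y < d \<longrightarrow> norm (h y - L y) \<le> e * norm y"
    "open U" "0 \<in> U" "h 0 = 0" "g 0 = 0" "\<And>x. x \<in> U \<Longrightarrow> g (h x) = x"
    "isCont h 0" "isCont g 0"
proof -
  have hg: "open U" "open V" "0 \<in> U" "h 0 = 0" "homeomorphism U V h g"
    and dh: "h differentiable (at 0)" and dg: "g differentiable (at 0)"
    using assms unfolding weak_diffeo_def hom_germ_def by auto
  obtain L where L: "(h has_derivative L) (at 0)" using dh unfolding differentiable_def by auto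
  obtain M where M: "(g has_derivative M) (at 0)" using dg unfolding differentiable_def by auto
  have gh: "\<And>x. x \<in> U \<Longrightarrow> g (h x) = x" using hg(5) unfolding homeomorphism_def by auto
  have g0: "g 0 = 0" using gh[OF hg(3)] hg(4) by simp
  have "((g \<circ> h) has_derivative (M \<circ> L)) (at 0)"
    using diff_chain_at[OF L] M hg(4) by simp
  moreover have "((g \<circ> h) has_derivative id) (at 0)"
    by (rule has_derivative_transform_within_open[OF has_derivative_id hg(1) hg(3)])
       (simp add: gh)
  ultimately have MLid: "M \<circ> L = id" by (rule has_derivative_unique)
  have blL: "bounded_linear L" using L has_derivative_bounded_linear by blast
  have blM: "bounded_linear M" using M has_derivative_bounded_linear by blast
  have inj: "L v \<noteq> 0" if "v \<noteq> 0" for v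
  proof
    assume "L v = 0"
    then have "M (L v) = 0" using blM linear_0 bounded_linear.linear by metis
    moreover have "M (L v) = v" using MLid by (metis comp_apply id_apply)
    ultimately show False using that by simp
  qed
  have est: "\<exists>d>0. \<forall>y. norm y < d \<longrightarrow> norm (h y - L y) \<le> e * norm y" if "e > 0" for e
    using L that hg(4) unfolding has_derivative_at_alt by auto
  have "isCont h 0" using dh differentiable_imp_continuous_within by blast
  moreover have "isCont g 0" using dg differentiable_imp_continuous_within by blast
  ultimately show ?thesis using that[OF blL inj est hg(1) hg(3) hg(4) g0 gh] by blast
qed


lemma dir_lemma:
  fixes h L :: "'a::euclidean_space \<Rightarrow> 'a"
  assumes blL: "bounded_linear L" and La: "L a \<noteq> 0"
    and est: "\<And>e. e > 0 \<Longrightarrow> \<exists>d>0. \<forall>y. norm y < d \<longrightarrow> norm (h y - L y) \<le> e * norm y"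
    and tpos: "\<And>i. t i > 0" and t0: "t \<longlonglongrightarrow> 0"
  shows "(\<lambda>i. h (t i *\<^sub>R a) /\<^sub>R norm (h (t i *\<^sub>R a))) \<longlonglongrightarrow> L a /\<^sub>R norm (L a)"
proof -
  define w where "w i = h (t i *\<^sub>R a) /\<^sub>R t i" for i
  have Llin: "L (c *\<^sub>R x) = c *\<^sub>R L x" for c x using blL by (simp add: linear_scale bounded_linear.linear)
  have "w \<longlonglongrightarrow> L a"
    unfolding tendsto_iff
  proof (intro allI impI)
    fix e :: real assume e: "e > 0"
    define e' where "e' = e / (2 * (norm a + 1))"
    have e': "e' > 0" using e unfolding e'_def by (intro divide_pos_pos) (auto intro: add_nonneg_pos)
    obtain d where d: "d > 0" "\<forall>y. norm y < d \<longrightarrow> norm (h y - L y) \<le> e' * norm y"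
      using est[OF e'] by auto
    have "\<forall>\<^sub>F i in sequentially. dist (t i) 0 < d / (norm a + 1)"
      using t0 d(1) unfolding tendsto_iff
      by (meson add_nonneg_pos divide_pos_pos norm_ge_zero zero_less_one)
    then show "\<forall>\<^sub>F i in sequentially. dist (w i) (L a) < e"
    proof (rule eventually_mono)
      fix i assume "dist (t i) 0 < d / (norm a + 1)"
      then have ti: "t i < d / (norm a + 1)" using tpos[of i] by simp
      have "norm (t i *\<^sub>R a) = t i * norm a" using tpos[of i] by simp
      also have "\<dots> \<le> t i * (norm a + 1)" using tpos[of i] by simp
      also have "\<dots> < d" using ti by (simp add: field_simps add_pos_nonneg)
      finally have nd: "norm (t i *\<^sub>R a) < d" .
      have "w i - L a = (h (t i *\<^sub>R a) - L (t i *\<^sub>R a)) /\<^sub>R t i"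
        using tpos[of i] by (simp add: w_def Llin algebra_simps)
      then have "dist (w i) (L a) = norm (h (t i *\<^sub>R a) - L (t i *\<^sub>R a)) / t i"
        using tpos[of i] by (simp add: dist_norm divide_inverse mult.commute)
      also have "\<dots> \<le> e' * norm (t i *\<^sub>R a) / t i"
        using d(2)[rule_format, OF nd] tpos[of i] by (intro divide_right_mono) auto
      also have "\<dots> = e' * norm a" using tpos[of i] by simp
      also have "\<dots> < e"
      proof -
        have "e' * norm a \<le> e' * (norm a + 1)" using e' by simp
         also have "\<dots> = e / 2" using add_nonneg_pos[OF norm_ge_zero[of a] zero_less_one]
          unfolding e'_def by (simp add: field_simps)
        finally show ?thesis using e by simp
      qed
      finally show "dist (w i) (L a) < e" .
    qed
  qed
  then have "(\<lambda>i. inverse (norm (w i)) *\<^sub>R w i) \<longlonglongrightarrow> inverse (norm (L a)) *\<^sub>R L a"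
    using La by (intro tendsto_intros) auto
  moreover have "h (t i *\<^sub>R a) /\<^sub>R norm (h (t i *\<^sub>R a)) = inverse (norm (w i)) *\<^sub>R w i" for i
  proof -
    have "h (t i *\<^sub>R a) = t i *\<^sub>R w i" using tpos[of i] by (simp add: w_def)
    then show ?thesis using tpos[of i] by simp
  qed
  ultimately show ?thesis by simp
qed

lemma small_ratio:
  fixes h L :: "'a::euclidean_space \<Rightarrow> 'a" and z :: "nat \<Rightarrow> 'b::real_normed_vector"
  assumes est: "\<And>e. e > 0 \<Longrightarrow> \<exists>d>0. \<forall>y. norm y < d \<longrightarrow> norm (h y - L y) \<le> e * norm y"
    and p0: "p \<longlonglongrightarrow> 0" and le: "\<And>i. norm (p i) \<le> norm (z i)"
  shows "(\<lambda>i. norm (h (p i) - L (p i)) / norm (z i)) \<longlonglongrightarrow> 0"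
  unfolding tendsto_iff
proof (intro allI impI)
  fix e :: real assume e: "e > 0"
  obtain d where d: "d > 0" "\<forall>y. norm y < d \<longrightarrow> norm (h y - L y) \<le> e/2 * norm y"
    using est[of "e/2"] e by auto
  have "\<forall>\<^sub>F i in sequentially. dist (p i) 0 < d" using p0 d(1) unfolding tendsto_iff by auto
  then show "\<forall>\<^sub>F i in sequentially. dist (norm (h (p i) - L (p i)) / norm (z i)) 0 < e"
  proof (rule eventually_mono)
    fix i assume "dist (p i) 0 < d"
    then have n: "norm (h (p i) - L (p i)) \<le> e/2 * norm (p i)" using d(2) by simp
    show "dist (norm (h (p i) - L (p i)) / norm (z i)) 0 < e"
    proof (cases "z i = 0")
      case True then show ?thesis using e by simp
    next
      case False
      then have zp: "norm (z i) > 0" by simp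
      have "norm (h (p i) - L (p i)) \<le> e/2 * norm (z i)"
        using n le[of i] e by (meson dual_order.trans half_gt_zero less_imp_le mult_left_mono)
      then have "norm (h (p i) - L (p i)) / norm (z i) \<le> e/2" using zp by (simp add: divide_le_eq)
      moreover have "norm (h (p i) - L (p i)) / norm (z i) \<ge> 0" by simp
      ultimately show ?thesis using e by (simp only: dist_real_def diff_zero abs_of_nonneg)
    qed
  qed
qed

lemma phi_lim:
  fixes L :: "'a::euclidean_space \<Rightarrow> 'a" and z :: "nat \<Rightarrow> 'a \<times> 'a"
  assumes blL: "bounded_linear L" and lim: "(\<lambda>i. z i /\<^sub>R norm (z i)) \<longlonglongrightarrow> d"
  shows "(\<lambda>i. (snd (z i) - L (fst (z i))) /\<^sub>R norm (z i)) \<longlonglongrightarrow> snd d - L (fst d)"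
proof -
  have "(\<lambda>i. snd (z i /\<^sub>R norm (z i)) - L (fst (z i /\<^sub>R norm (z i)))) \<longlonglongrightarrow> snd d - L (fst d)"
    by (intro tendsto_intros bounded_linear.tendsto[OF blL] lim)
  moreover have "snd (z i /\<^sub>R norm (z i)) - L (fst (z i /\<^sub>R norm (z i))) =
     (snd (z i) - L (fst (z i))) /\<^sub>R norm (z i)" for i
    using blL by (simp add: linear_scale bounded_linear.linear scaleR_diff_right)
  ultimately show ?thesis by simp
qed

theorem theorem4p19:
  fixes h g :: "'a::euclidean_space \<Rightarrow> 'a" and U V :: "'a set"
  assumes "weak_diffeo h g U V"
  shows "SSP_homeo h U \<and> semiline_SSP h U"
proof -
  obtain L where blL: "bounded_linear L" and inj: "\<And>v. v \<noteq> 0 \<Longrightarrow> L v \<noteq> 0"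
    and est: "\<And>e. e > 0 \<Longrightarrow> \<exists>d>0. \<forall>y. norm y < d \<longrightarrow> norm (h y - L y) \<le> e * norm y"
    and oU: "open U" and U0: "0 \<in> U" and h0: "h 0 = 0" and g0: "g 0 = 0"
    and gh: "\<And>x. x \<in> U \<Longrightarrow> g (h x) = x" and ch: "isCont h 0" and cg: "isCont g 0"
    by (rule setup_facts[OF assms]) (rule that)
  have L0: "L 0 = 0" using blL bounded_linear.linear linear_0 by metis
  have semi: "semiline_SSP h U"
    unfolding semiline_SSP_def
  proof (intro allI impI)
    fix a :: 'a assume na: "norm a = 1"
    define S where "S = h ` (semiline a \<inter> U)"
    define d0 where "d0 = L a /\<^sub>R norm (L a)"
    have a0: "a \<noteq> 0" using na by auto
    have La: "L a \<noteq> 0" using inj[OF a0] .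
    have ex: "d0 \<in> dirs S"
    proof -
      obtain \<delta> where \<delta>: "\<delta> > 0" "ball 0 \<delta> \<subseteq> U" using oU U0 open_contains_ball by blast
      define t where "t i = (\<delta>/2) * inverse (real (Suc i))" for i
      have tpos: "t i > 0" for i using \<delta> by (simp add: t_def)
      have tlt: "t i < \<delta>" for i
      proof -
        have "inverse (real (Suc i)) \<le> 1" by (simp add: inverse_le_1_iff)
        then have "t i \<le> \<delta>/2" using \<delta> unfolding t_def
          by (intro mult_left_le) auto
        then show ?thesis using \<delta> by simp
      qed
      have t0: "t \<longlonglongrightarrow> 0" unfolding t_def
        by (intro tendsto_mult_right_zero LIMSEQ_inverse_real_of_nat)
      define x where "x i = h (t i *\<^sub>R a)" for i
      have inU: "t i *\<^sub>R a \<in> U" for i using \<delta>(2) tlt[of i] tpos[of i] na by auto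
      have xS: "x i \<in> S - {0}" for i
      proof -
        have "t i *\<^sub>R a \<in> semiline a" unfolding semiline_def using tpos[of i] by auto
        moreover have "x i \<noteq> 0"
        proof
          assume "x i = 0"
          then have "g (x i) = 0" using g0 by simp
          then have "t i *\<^sub>R a = 0" using gh[OF inU[of i]] by (simp add: x_def)
          then show False using tpos[of i] a0 by simp
        qed
        ultimately show ?thesis using inU[of i] unfolding S_def x_def by auto
      qed
      have "(\<lambda>i. t i *\<^sub>R a) \<longlonglongrightarrow> 0" using tendsto_scaleR[OF t0 tendsto_const[of a]] by simp
      then have "(\<lambda>i. h (t i *\<^sub>R a)) \<longlonglongrightarrow> h 0" by (rule isCont_tendsto_compose[OF ch])
      then have "x \<longlonglongrightarrow> 0" unfolding x_def using h0 by simp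
      moreover have "(\<lambda>i. x i /\<^sub>R norm (x i)) \<longlonglongrightarrow> d0"
        unfolding x_def d0_def by (rule dir_lemma[OF blL La est tpos t0])
      ultimately show ?thesis unfolding dirs_def d0_def using xS La by auto
    qed
    have un: "d = d0" if d: "d \<in> dirs S" for d
    proof -
      obtain x where x: "\<And>i. x i \<in> S - {0}" "x \<longlonglongrightarrow> 0" "(\<lambda>i. x i /\<^sub>R norm (x i)) \<longlonglongrightarrow> d"
        using d unfolding dirs_def by auto
      have "\<forall>i. \<exists>s. s \<ge> 0 \<and> s *\<^sub>R a \<in> U \<and> x i = h (s *\<^sub>R a)"
        using x(1) unfolding S_def semiline_def by blast
      then have "\<exists>t. \<forall>i. t i \<ge> 0 \<and> t i *\<^sub>R a \<in> U \<and> x i = h (t i *\<^sub>R a)" by (rule choice)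
      then obtain t where t: "\<And>i. t i \<ge> 0" "\<And>i. t i *\<^sub>R a \<in> U" "\<And>i. x i = h (t i *\<^sub>R a)"
        by blast
      have tpos: "t i > 0" for i
      proof -
        have "t i \<noteq> 0" using x(1)[of i] t(3)[of i] h0 by auto
        then show ?thesis using t(1)[of i] by simp
      qed
      have "(\<lambda>i. g (x i)) \<longlonglongrightarrow> 0" using isCont_tendsto_compose[OF cg x(2)] g0 by simp
      moreover have "g (x i) = t i *\<^sub>R a" for i using gh[OF t(2)] t(3) by simp
      ultimately have "(\<lambda>i. t i *\<^sub>R a) \<longlonglongrightarrow> 0" by simp
      then have "(\<lambda>i. norm (t i *\<^sub>R a)) \<longlonglongrightarrow> 0" using tendsto_norm_zero by blast
      moreover have "norm (t i *\<^sub>R a) = t i" for i using tpos[of i] na by simp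
      ultimately have t0: "t \<longlonglongrightarrow> 0" by simp
      have "(\<lambda>i. x i /\<^sub>R norm (x i)) \<longlonglongrightarrow> d0"
        unfolding t(3) d0_def by (rule dir_lemma[OF blL La est tpos t0])
      then show ?thesis using x(3) LIMSEQ_unique by blast
    qed
    show "\<exists>!d. d \<in> dirs S" using ex un by blast
  qed
  have ssp: "SSP_homeo h U"
  proof -
    define A where "A = {(x, h x) | x. x \<in> U}"
    have 0: "(0, 0) \<in> A" unfolding A_def using U0 h0 by auto
    have dirL: "snd d = L (fst d)" if d: "d \<in> dirs A" for d
    proof -
      obtain x where x: "\<And>i. x i \<in> A - {0}" "x \<longlonglongrightarrow> 0" "(\<lambda>i. x i /\<^sub>R norm (x i)) \<longlonglongrightarrow> d"
        using d unfolding dirs_def by auto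
      have xe: "snd (x i) = h (fst (x i))" for i using x(1)[of i] unfolding A_def by auto
      have "(\<lambda>i. (snd (x i) - L (fst (x i))) /\<^sub>R norm (x i)) \<longlonglongrightarrow> snd d - L (fst d)"
        by (rule phi_lim[OF blL x(3)])
      moreover have "(\<lambda>i. norm (h (fst (x i)) - L (fst (x i))) / norm (x i)) \<longlonglongrightarrow> 0"
      proof (rule small_ratio[OF est])
        show "(\<lambda>i. fst (x i)) \<longlonglongrightarrow> 0" using tendsto_fst[OF x(2)] by simp
        show "norm (fst (x i)) \<le> norm (x i)" for i
          by (metis norm_fst_le prod.collapse)
      qed
      then have "(\<lambda>i. norm ((snd (x i) - L (fst (x i))) /\<^sub>R norm (x i))) \<longlonglongrightarrow> 0"
        by (simp add: xe divide_inverse mult.commute)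
      then have "(\<lambda>i. (snd (x i) - L (fst (x i))) /\<^sub>R norm (x i)) \<longlonglongrightarrow> 0"
        using tendsto_norm_zero_iff by blast
      ultimately have "snd d - L (fst d) = 0" using LIMSEQ_unique by blast
      then show ?thesis by simp
    qed
    have "0 \<in> closure A" using 0 closure_subset by (metis subsetD zero_prod_def)
    moreover have "\<exists>b. (\<forall>m. b m \<in> A) \<and>
             (\<lambda>m. norm (a m - b m) / norm (a m)) \<longlonglongrightarrow> 0 \<and>
             (\<lambda>m. norm (a m - b m) / norm (b m)) \<longlonglongrightarrow> 0"
      if a0: "a \<longlonglongrightarrow> 0" and ad: "(\<lambda>m. a m /\<^sub>R norm (a m)) \<longlonglongrightarrow> d" and dA: "d \<in> dirs A"
      for a :: "nat \<Rightarrow> 'a \<times> 'a" and d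
    proof -
      define p where "p m = fst (a m)" for m
      define q where "q m = snd (a m)" for m
      have nd: "norm d = 1" using dA unfolding dirs_def by auto
      have p0: "p \<longlonglongrightarrow> 0" unfolding p_def using tendsto_fst[OF a0] by simp
      define b where "b m = (if p m \<in> U then (p m, h (p m)) else (0, 0))" for m
      have bA: "b m \<in> A" for m using 0 unfolding b_def A_def by auto
      define r where "r m = norm (q m - h (p m)) / norm (a m)" for m
      have r1: "(\<lambda>m. norm (q m - L (p m)) / norm (a m)) \<longlonglongrightarrow> 0"
      proof -
        have "(\<lambda>m. (snd (a m) - L (fst (a m))) /\<^sub>R norm (a m)) \<longlonglongrightarrow> snd d - L (fst d)"
          by (rule phi_lim[OF blL ad])
        then have "(\<lambda>m. (q m - L (p m)) /\<^sub>R norm (a m)) \<longlonglongrightarrow> 0"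
          using dirL[OF dA] by (simp add: p_def q_def)
        then have "(\<lambda>m. norm ((q m - L (p m)) /\<^sub>R norm (a m))) \<longlonglongrightarrow> 0"
          using tendsto_norm_zero by blast
        then show ?thesis by (simp add: divide_inverse mult.commute)
      qed
      have r2: "(\<lambda>m. norm (h (p m) - L (p m)) / norm (a m)) \<longlonglongrightarrow> 0"
      proof (rule small_ratio[OF est p0])
        show "norm (p m) \<le> norm (a m)" for m unfolding p_def by (metis norm_fst_le prod.collapse)
      qed
      have r0: "r \<longlonglongrightarrow> 0"
      proof (rule Lim_null_comparison)
        show "(\<lambda>m. norm (q m - L (p m)) / norm (a m) + norm (h (p m) - L (p m)) / norm (a m)) \<longlonglongrightarrow> 0"
          using tendsto_add[OF r1 r2] by simp
        show "\<forall>\<^sub>F m in sequentially. norm (r m) \<le> norm (q m - L (p m)) / norm (a m) + norm (h (p m) - L (p m)) / norm (a m)"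
        proof (rule always_eventually, rule allI)
          fix m
          have "norm (q m - h (p m)) \<le> norm (q m - L (p m)) + norm (h (p m) - L (p m))"
            using norm_triangle_ineq4[of "q m - L (p m)" "h (p m) - L (p m)"] by simp
          then show "norm (r m) \<le> norm (q m - L (p m)) / norm (a m) + norm (h (p m) - L (p m)) / norm (a m)"
            unfolding r_def by (simp add: add_divide_distrib[symmetric] divide_right_mono)
        qed
      qed
      have evU: "\<forall>\<^sub>F m in sequentially. p m \<in> U" using topological_tendstoD[OF p0 oU U0] .
      have evab: "\<forall>\<^sub>F m in sequentially. norm (a m - b m) = norm (q m - h (p m))"
        using evU
      proof eventually_elim
        case (elim m)
        then have "a m - b m = (0, q m - h (p m))" by (simp add: b_def p_def q_def prod_eq_iff)
        then show ?case by (simp add: norm_Pair)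
      qed
      have nlim: "(\<lambda>m. norm (a m /\<^sub>R norm (a m))) \<longlonglongrightarrow> norm d" using ad by (rule tendsto_norm)
      have "\<forall>\<^sub>F m in sequentially. norm (a m /\<^sub>R norm (a m)) > 1/2"
        using order_tendstoD(1)[OF nlim, of "1/2"] nd by simp
      then have evnz: "\<forall>\<^sub>F m in sequentially. a m \<noteq> 0" by eventually_elim auto
      have evr: "\<forall>\<^sub>F m in sequentially. r m < 1/2" using order_tendstoD(2)[OF r0, of "1/2"] by simp
      show ?thesis
      proof (intro exI conjI)
        show "\<forall>m. b m \<in> A" using bA by blast
        show "(\<lambda>m. norm (a m - b m) / norm (a m)) \<longlonglongrightarrow> 0"
        proof (rule Lim_null_comparison[OF _ r0])
          show "\<forall>\<^sub>F m in sequentially. norm (norm (a m - b m) / norm (a m)) \<le> r m"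
            using evab by eventually_elim (simp add: r_def)
        qed
        show "(\<lambda>m. norm (a m - b m) / norm (b m)) \<longlonglongrightarrow> 0"
        proof (rule Lim_null_comparison)
          show "(\<lambda>m. 2 * r m) \<longlonglongrightarrow> 0" using tendsto_mult_right_zero[OF r0] by simp
          show "\<forall>\<^sub>F m in sequentially. norm (norm (a m - b m) / norm (b m)) \<le> 2 * r m"
            using evab evnz evr
          proof eventually_elim
            case (elim m)
            have an: "norm (a m) > 0" using elim(2) by simp
            have rm: "norm (a m - b m) = r m * norm (a m)" using elim(1) an by (simp add: r_def)
            have "norm (a m) \<le> norm (b m) + norm (a m - b m)"
              using norm_triangle_ineq[of "b m" "a m - b m"] by simp
            moreover have "r m * norm (a m) \<le> 1/2 * norm (a m)"
              using elim(3) an by (intro mult_right_mono) auto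
            ultimately have bb: "norm (b m) \<ge> norm (a m) / 2" using rm by linarith
            then have bp: "norm (b m) > 0" using an by linarith
            have "norm (a m - b m) / norm (b m) \<le> 2 * r m"
            proof -
              have "norm (a m - b m) = r m * norm (a m)" by (rule rm)
              also have "\<dots> \<le> r m * (2 * norm (b m))"
                using bb elim(1) r_def by (intro mult_left_mono) (auto simp: r_def)
              finally show ?thesis using bp by (simp add: divide_le_eq)
            qed
            then show ?case by simp
          qed
        qed
      qed
    qed
    ultimately have "SSP A" unfolding SSP_def by (intro conjI allI impI) auto
    then show ?thesis unfolding SSP_homeo_def A_def by simp
  qed
  show ?thesis using ssp semi by blast
qed

end
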